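(* Let $G$ and $H$ be graphs, each with at least two vertices. If there exist $r_1,r_2\in(0,1)$ with $r_1^2+r_2^2=1$ such that $G$ admits a spherical embedding of dimension $\operatorname{sdim}G$ and radius $r_1$ and $H$ admits a spherical embedding of dimension $\operatorname{sdim}H$ and radius $r_2$, then $\dim(G+H)=\operatorname{sdim}G+\operatorname{sdim}H$. Otherwise $\dim(G+H)>\operatorname{sdim}G+\operatorname{sdim}H$.
   Context: All graphs are finite and simple. A unit-distance embedding of a graph $G$ in $\mathbb{R}^n$ is an injective map $f$ from the vertex set of $G$ to $\mathbb{R}^n$ such that $|f(u)-f(v)|=1$ for every edge $uv$ and no point $f(w)$ lies on the segment $[f(u),f(v)]$ for an edge $uv$ with $w\notin\{u,v\}$ (edges may cross one another). The dimension $\dim G$ is the least natural number $n$ such that $G$ has a unit-distance embedding in $\mathbb{R}^n$. $G$ admits a spherical embedding of dimension $k$ and radius $r$ if $G$ has a unit-distance embedding in $\mathbb{R}^k$ all of whose vertices lie on a sphere $\{x\in\mathbb{R}^k:|x-c|=r\}$. The spherical dimension $\operatorname{sdim}G$ is the least $k$ such that $G$ admits a spherical embedding of dimension $k$ and some radius $r<1$ (by convention $\operatorname{sdim}$ of the graph with no vertices is $-\infty$ and $\operatorname{sdim}K_1=0$). The sum $G+H$ is obtained from disjoint copies of $G$ and $H$ by adding all edges between a vertex of $G$ and a vertex of $H$. *)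

theory Defs
  imports Main Complex_Main
begin

type_synonym 'a graph = "'a set \<times> 'a set set"

definition verts :: "'a graph \<Rightarrow> 'a set" where "verts G = fst G"
definition edges :: "'a graph \<Rightarrow> 'a set set" where "edges G = snd G"

definition simple_graph :: "'a graph \<Rightarrow> bool" where
  "simple_graph G \<longleftrightarrow> finite (verts G) \<and>
     (\<forall>e\<in>edges G. e \<subseteq> verts G \<and> card e = 2)"

text \<open>Euclidean space R^n represented as functions nat => real vanishing at indices >= n.\<close>

definition Rn :: "nat \<Rightarrow> (nat \<Rightarrow> real) set" where
  "Rn n = {x. \<forall>i\<ge>n. x i = 0}"

definition edist :: "nat \<Rightarrow> (nat \<Rightarrow> real) \<Rightarrow> (nat \<Rightarrow> real) \<Rightarrow> real" where
  "edist n x y = sqrt (\<Sum>i<n. (x i - y i)^2)"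

definition seg :: "(nat \<Rightarrow> real) \<Rightarrow> (nat \<Rightarrow> real) \<Rightarrow> (nat \<Rightarrow> real) set" where
  "seg x y = {z. \<exists>t. 0 \<le> t \<and> t \<le> 1 \<and> (\<forall>i. z i = (1 - t) * x i + t * y i)}"

definition unit_embedding :: "'a graph \<Rightarrow> nat \<Rightarrow> ('a \<Rightarrow> nat \<Rightarrow> real) \<Rightarrow> bool" where
  "unit_embedding G n f \<longleftrightarrow>
     f ` verts G \<subseteq> Rn n \<and> inj_on f (verts G) \<and>
     (\<forall>u v. {u, v} \<in> edges G \<longrightarrow> edist n (f u) (f v) = 1) \<and>
     (\<forall>u v w. {u, v} \<in> edges G \<longrightarrow> w \<in> verts G \<longrightarrow> w \<noteq> u \<longrightarrow> w \<noteq> v \<longrightarrow>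
        f w \<notin> seg (f u) (f v))"

definition graph_dim :: "'a graph \<Rightarrow> nat" where
  "graph_dim G = (LEAST n. \<exists>f. unit_embedding G n f)"

definition spherical_embedding :: "'a graph \<Rightarrow> nat \<Rightarrow> real \<Rightarrow> bool" where
  "spherical_embedding G k r \<longleftrightarrow>
     (\<exists>f c. unit_embedding G k f \<and> c \<in> Rn k \<and> (\<forall>v\<in>verts G. edist k (f v) c = r))"

text \<open>Spherical dimension (as a natural number; for graphs with at least one vertex;
the convention sdim of the empty graph = -infinity is not needed here).\<close>
definition sdim :: "'a graph \<Rightarrow> nat" where
  "sdim G = (LEAST k. \<exists>r<1. spherical_embedding G k r)"

definition graph_sum :: "'a graph \<Rightarrow> 'b graph \<Rightarrow> ('a + 'b) graph" where
  "graph_sum G H =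
     (Inl ` verts G \<union> Inr ` verts H,
      ((\<lambda>e. Inl ` e) ` edges G) \<union> ((\<lambda>e. Inr ` e) ` edges H) \<union>
      {{Inl u, Inr v} | u v. u \<in> verts G \<and> v \<in> verts H})"

end

theory Submission
  imports Defs
begin


definition ip :: "nat \<Rightarrow> (nat \<Rightarrow> real) \<Rightarrow> (nat \<Rightarrow> real) \<Rightarrow> real" where
  "ip n x y = (\<Sum>i<n. x i * y i)"

definition proj :: "nat \<Rightarrow> (nat\<Rightarrow>real) set \<Rightarrow> (nat\<Rightarrow>real) \<Rightarrow> (nat\<Rightarrow>real)" where
  "proj n E v = (\<lambda>i. \<Sum>e\<in>E. ip n v e * e i)"

definition onset :: "nat \<Rightarrow> (nat\<Rightarrow>real) set \<Rightarrow> bool" where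
  "onset n E \<longleftrightarrow> finite E \<and> E \<subseteq> Rn n \<and> (\<forall>e\<in>E. ip n e e = 1) \<and>
     (\<forall>e\<in>E. \<forall>e'\<in>E. e \<noteq> e' \<longrightarrow> ip n e e' = 0)"

lemma ip_comm: "ip n x y = ip n y x"
  unfolding ip_def by (simp add: mult.commute)

lemma ip_diff_left: "ip n (\<lambda>i. x i - y i) z = ip n x z - ip n y z"
  unfolding ip_def by (simp add: left_diff_distrib sum_subtractf)

lemma ip_diff_right: "ip n z (\<lambda>i. x i - y i) = ip n z x - ip n z y"
  unfolding ip_def by (simp add: right_diff_distrib sum_subtractf)

lemma ip_add_left: "ip n (\<lambda>i. x i + y i) z = ip n x z + ip n y z"
  unfolding ip_def by (simp add: distrib_right sum.distrib)

lemma ip_scale_left: "ip n (\<lambda>i. a * x i) z = a * ip n x z"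
  unfolding ip_def by (simp add: sum_distrib_left mult.assoc)

lemma ip_div_left: "ip n (\<lambda>i. x i / a) z = ip n x z / a"
  unfolding ip_def by (simp add: sum_divide_distrib)

lemma ip_div_right: "ip n z (\<lambda>i. x i / a) = ip n z x / a"
  unfolding ip_def by (simp add: sum_divide_distrib)

lemma ip_lc_left: "ip n (\<lambda>i. \<Sum>e\<in>E. a e * e i) z = (\<Sum>e\<in>E. a e * ip n e z)"
  unfolding ip_def by (simp add: sum_distrib_right sum_distrib_left mult.assoc sum.swap[of _ E])

lemma ip_self_nonneg: "ip n x x \<ge> 0"
  unfolding ip_def by (simp add: sum_nonneg)

lemma ip_zero_eq:
  assumes "x \<in> Rn n" "y \<in> Rn n" "ip n (\<lambda>i. x i - y i) (\<lambda>i. x i - y i) = 0"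
  shows "x = y"
proof
  fix i
  show "x i = y i"
  proof (cases "i < n")
    case True
    have "(\<Sum>j<n. (x j - y j) * (x j - y j)) = 0" using assms(3) unfolding ip_def .
    then have "\<forall>j\<in>{..<n}. (x j - y j) * (x j - y j) = 0"
      by (subst sum_nonneg_eq_0_iff[symmetric]) auto
    then show ?thesis using True by auto
  next
    case False then show ?thesis using assms(1,2) unfolding Rn_def by auto
  qed
qed

lemma edist_ip: "edist n x y = sqrt (ip n (\<lambda>i. x i - y i) (\<lambda>i. x i - y i))"
  unfolding edist_def ip_def by (simp add: power2_eq_square)

lemma edist_zero: "x \<in> Rn n \<Longrightarrow> y \<in> Rn n \<Longrightarrow> edist n x y = 0 \<Longrightarrow> x = y"
  using ip_zero_eq by (simp add: edist_ip)

lemma edist_sq: "(edist n x y)^2 = ip n (\<lambda>i. x i - y i) (\<lambda>i. x i - y i)"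
  by (simp add: edist_ip ip_self_nonneg)

lemma Rn_diff: "x \<in> Rn n \<Longrightarrow> y \<in> Rn n \<Longrightarrow> (\<lambda>i. x i - y i) \<in> Rn n"
  unfolding Rn_def by auto
lemma Rn_add: "x \<in> Rn n \<Longrightarrow> y \<in> Rn n \<Longrightarrow> (\<lambda>i. x i + y i) \<in> Rn n"
  unfolding Rn_def by auto

lemma proj_Rn: "E \<subseteq> Rn n \<Longrightarrow> proj n E v \<in> Rn n"
  unfolding proj_def Rn_def by (auto intro!: sum.neutral)

lemma ip_proj_left: "ip n (proj n E v) z = (\<Sum>e\<in>E. ip n v e * ip n e z)"
  unfolding proj_def by (rule ip_lc_left)

lemma ip_proj_e:
  assumes "onset n E" "e0 \<in> E"
  shows "ip n (proj n E v) e0 = ip n v e0"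
proof -
  have "ip n (proj n E v) e0 = (\<Sum>e\<in>E. if e = e0 then ip n v e0 else 0)"
    unfolding ip_proj_left using assms unfolding onset_def by (intro sum.cong) auto
  also have "\<dots> = ip n v e0" using assms unfolding onset_def by simp
  finally show ?thesis .
qed

lemma proj_idem: "onset n E \<Longrightarrow> proj n E (proj n E v) = proj n E v"
proof -
  assume a: "onset n E"
  have "proj n E (proj n E v) = (\<lambda>i. \<Sum>e\<in>E. ip n v e * e i)"
    unfolding proj_def[of n E "proj n E v"] using ip_proj_e[OF a] by (intro ext sum.cong) auto
  also have "\<dots> = proj n E v" by (simp add: proj_def)
  finally show ?thesis .
qed

lemma proj_diff: "proj n E (\<lambda>i. x i - y i) = (\<lambda>i. proj n E x i - proj n E y i)"
  unfolding proj_def by (rule ext) (simp add: ip_diff_left left_diff_distrib sum_subtractf)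

lemma bessel:
  assumes "onset n E"
  shows "(\<Sum>e\<in>E. (ip n v e)^2) \<le> ip n v v"
proof -
  let ?p = "proj n E v"
  have a: "ip n ?p v = (\<Sum>e\<in>E. (ip n v e)^2)"
    unfolding ip_proj_left by (simp add: ip_comm[of n _ v] power2_eq_square)
  have b: "ip n ?p ?p = (\<Sum>e\<in>E. (ip n v e)^2)"
    unfolding ip_proj_left[of n E v ?p]
    using assms by (simp add: ip_comm[of n _ ?p] ip_proj_e power2_eq_square)
  have "0 \<le> ip n (\<lambda>i. v i - ?p i) (\<lambda>i. v i - ?p i)" by (rule ip_self_nonneg)
  also have "\<dots> = ip n v v - ip n ?p v - ip n v ?p + ip n ?p ?p"
    by (simp add: ip_diff_left ip_diff_right)
  finally show ?thesis using a b by (simp add: ip_comm[of n v ?p])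
qed

lemma parseval:
  assumes "proj n E v = v"
  shows "ip n v v = (\<Sum>e\<in>E. (ip n v e)^2)"
proof -
  have "ip n v v = ip n (proj n E v) v" using assms by simp
  also have "\<dots> = (\<Sum>e\<in>E. (ip n v e)^2)"
    unfolding ip_proj_left by (simp add: ip_comm[of n _ v] power2_eq_square)
  finally show ?thesis .
qed

lemma onset_card:
  assumes "onset n E"
  shows "card E \<le> n"
proof -
  have fin: "finite E" using assms unfolding onset_def by auto
  have "real (card E) = (\<Sum>e\<in>E. ip n e e)" using assms unfolding onset_def by simp
  also have "\<dots> = (\<Sum>i<n. \<Sum>e\<in>E. (e i)^2)"
    unfolding ip_def by (simp add: sum.swap[of _ E] power2_eq_square)
  also have "\<dots> \<le> (\<Sum>i<n. 1)"
  proof (rule sum_mono)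
    fix i assume i: "i \<in> {..<n}"
    let ?d = "\<lambda>j. if j = i then 1 else (0::real)"
    have "\<And>e. ip n ?d e = e i" unfolding ip_def using i
      by (simp add: if_distrib[of "\<lambda>a. a * _"] sum.delta cong: if_cong)
    moreover have "ip n ?d ?d = 1" unfolding ip_def using i
      by (simp add: if_distrib[of "\<lambda>a. a * _"] sum.delta cong: if_cong)
    ultimately show "(\<Sum>e\<in>E. (e i)^2) \<le> 1" using bessel[OF assms, of ?d] by simp
  qed
  finally show ?thesis by simp
qed



lemma gs:
  assumes "finite S" "S \<subseteq> Rn n"
  shows "\<exists>E. onset n E \<and> (\<forall>s\<in>S. proj n E s = s) \<and>
             (\<forall>y. (\<forall>s\<in>S. ip n y s = 0) \<longrightarrow> (\<forall>e\<in>E. ip n y e = 0))"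
  using assms
proof (induction S rule: finite_induct)
  case empty
  show ?case by (rule exI[of _ "{}"]) (simp add: onset_def)
next
  case (insert s S)
  have SR: "S \<subseteq> Rn n" using insert.prems by simp
  obtain E where oE: "onset n E" and pE: "\<forall>s\<in>S. proj n E s = s"
    and yE: "\<forall>y. (\<forall>s\<in>S. ip n y s = 0) \<longrightarrow> (\<forall>e\<in>E. ip n y e = 0)"
    using insert.IH[OF SR] by blast
  have sR: "s \<in> Rn n" using insert.prems by simp
  have ER: "E \<subseteq> Rn n" using oE unfolding onset_def by auto
  define w where "w = (\<lambda>i. s i - proj n E s i)"
  have wR: "w \<in> Rn n" unfolding w_def by (rule Rn_diff[OF sR proj_Rn[OF ER]])
  have we: "ip n w e = 0" if "e \<in> E" for e
    unfolding w_def ip_diff_left using ip_proj_e[OF oE that] by simp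
  show ?case
  proof (cases "ip n w w = 0")
    case True
    have "w = (\<lambda>i. 0)" using ip_zero_eq[OF wR, of "\<lambda>i. 0"] True unfolding Rn_def by simp
    then have "\<And>i. w i = 0" by simp
    then have "proj n E s = s" unfolding w_def by (intro ext) simp
    then show ?thesis using oE pE yE by (intro exI[of _ E]) auto
  next
    case False
    then have wpos: "ip n w w > 0" using ip_self_nonneg[of n w] by linarith
    define m where "m = sqrt (ip n w w)"
    have mpos: "m > 0" unfolding m_def using wpos by simp
    have m2: "m * m = ip n w w" unfolding m_def using wpos by simp
    define u where "u = (\<lambda>i. w i / m)"
    have uR: "u \<in> Rn n" using wR unfolding u_def Rn_def by auto
    have uu: "ip n u u = 1" unfolding u_def ip_div_left ip_div_right
      using m2 mpos wpos by (simp add: field_simps)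
    have ue: "ip n u e = 0" if "e \<in> E" for e
      unfolding u_def ip_div_left using we[OF that] by simp
    have eu: "ip n e u = 0" if "e \<in> E" for e
      using ue[OF that] ip_comm[of n e u] by simp
    have uE: "u \<notin> E" using ue[of u] uu by auto
    have oE': "onset n (insert u E)"
      using oE uR uu ue eu uE unfolding onset_def by auto
    have finE: "finite E" using oE unfolding onset_def by auto
    have projI: "proj n (insert u E) v = (\<lambda>i. proj n E v i + ip n v u * u i)" for v
      unfolding proj_def using finE uE by (simp add: add.commute)
    have su: "ip n s u = m"
    proof -
      have "s = (\<lambda>i. w i + proj n E s i)" unfolding w_def by simp
      then have "ip n s u = ip n w u + ip n (proj n E s) u"
        by (metis ip_add_left)
      also have "ip n (proj n E s) u = 0"
        unfolding ip_proj_left using eu by simp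
      also have "ip n w u = ip n w w / m" unfolding u_def ip_div_right by simp
      finally have "ip n s u = ip n w w / m" by simp
      then show ?thesis using mpos by (simp add: m2[symmetric])
    qed
    have p1: "proj n (insert u E) s = s"
      unfolding projI su unfolding u_def w_def using mpos by auto
    have p2: "proj n (insert u E) s' = s'" if "s' \<in> S" for s'
    proof -
      have "ip n s' u = ip n (proj n E s') u" using pE that by simp
      also have "\<dots> = 0" unfolding ip_proj_left using eu by simp
      finally show ?thesis unfolding projI using pE that by simp
    qed
    have p3: "\<forall>e\<in>insert u E. ip n y e = 0" if "\<forall>s\<in>insert s S. ip n y s = 0" for y
    proof -
      have yE0: "\<forall>e\<in>E. ip n y e = 0" using yE that by auto
      have ey: "ip n e y = 0" if "e \<in> E" for e using yE0 that ip_comm[of n e y] by simp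
      have "ip n y w = ip n y s - ip n (proj n E s) y" unfolding w_def ip_diff_right
        using ip_comm[of n y "proj n E s"] by simp
      also have "ip n (proj n E s) y = 0" unfolding ip_proj_left using ey
        by simp
      finally have "ip n y w = 0" using that by simp
      then have "ip n y u = 0" unfolding u_def by (simp add: ip_div_right)
      then show ?thesis using yE0 by auto
    qed
    have "\<forall>s'\<in>insert s S. proj n (insert u E) s' = s'" using p1 p2 by blast
    then show ?thesis using oE' p3 by blast
  qed
qed

lemma polar:
  "ip n (\<lambda>i. q i - q0 i) (\<lambda>i. p i - p0 i) =
    - (ip n (\<lambda>i. q i - p i) (\<lambda>i. q i - p i) - ip n (\<lambda>i. q i - p0 i) (\<lambda>i. q i - p0 i)
       - ip n (\<lambda>i. q0 i - p i) (\<lambda>i. q0 i - p i) + ip n (\<lambda>i. q0 i - p0 i) (\<lambda>i. q0 i - p0 i)) / 2"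
proof -
  have "\<And>i. (q i - q0 i) * (p i - p0 i) = - ((q i - p i) * (q i - p i) - (q i - p0 i) * (q i - p0 i)
       - (q0 i - p i) * (q0 i - p i) + (q0 i - p0 i) * (q0 i - p0 i)) / 2"
    by (simp add: field_simps)
  then have "ip n (\<lambda>i. q i - q0 i) (\<lambda>i. p i - p0 i) = (\<Sum>i<n. - ((q i - p i) * (q i - p i) - (q i - p0 i) * (q i - p0 i)
       - (q0 i - p i) * (q0 i - p i) + (q0 i - p0 i) * (q0 i - p0 i)) / 2)"
    unfolding ip_def by (intro sum.cong) (auto simp: field_simps)
  also have "\<dots> = - ((\<Sum>i<n. (q i - p i) * (q i - p i)) - (\<Sum>i<n. (q i - p0 i) * (q i - p0 i))
       - (\<Sum>i<n. (q0 i - p i) * (q0 i - p i)) + (\<Sum>i<n. (q0 i - p0 i) * (q0 i - p0 i))) / 2"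
    by (simp only: sum_divide_distrib[symmetric] sum_negf sum.distrib sum_subtractf)
  finally show ?thesis unfolding ip_def .
qed

lemma onset_union:
  assumes "onset n E" "onset n F" "\<forall>e\<in>E. \<forall>f\<in>F. ip n e f = 0"
  shows "card E + card F \<le> n"
proof -
  have d: "E \<inter> F = {}" using assms unfolding onset_def by force
  have "onset n (E \<union> F)" using assms unfolding onset_def
  proof (intro conjI)
    show "\<forall>e\<in>E \<union> F. \<forall>e'\<in>E \<union> F. e \<noteq> e' \<longrightarrow> ip n e e' = 0"
    proof (intro ballI impI)
      fix e e' assume "e \<in> E \<union> F" "e' \<in> E \<union> F" "e \<noteq> e'"
      moreover have "ip n e e' = ip n e' e" by (rule ip_comm)
      ultimately show "ip n e e' = 0" using assms unfolding onset_def
        by auto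
    qed
  qed (use assms in \<open>auto simp: onset_def\<close>)
  then have "card (E \<union> F) \<le> n" by (rule onset_card)
  then show ?thesis using d assms unfolding onset_def by (simp add: card_Un_disjoint)
qed

lemma decomp:
  assumes "finite P" "finite Q" "P \<subseteq> Rn n" "Q \<subseteq> Rn n" "p0 \<in> P" "q0 \<in> Q"
    and dist1: "\<forall>p\<in>P. \<forall>q\<in>Q. edist n p q = 1"
  shows "\<exists>c E F. c \<in> Rn n \<and> onset n E \<and> onset n F \<and> (\<forall>e\<in>E. \<forall>f\<in>F. ip n e f = 0) \<and>
     (\<forall>p\<in>P. proj n E (\<lambda>i. p i - c i) = (\<lambda>i. p i - c i)) \<and>
     (\<forall>q\<in>Q. proj n F (\<lambda>i. q i - c i) = (\<lambda>i. q i - c i))"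
proof -
  have sq1: "ip n (\<lambda>i. p i - q i) (\<lambda>i. p i - q i) = 1" if "p \<in> P" "q \<in> Q" for p q
    using dist1 that edist_sq[of n p q] by simp
  have sq1': "ip n (\<lambda>i. q i - p i) (\<lambda>i. q i - p i) = 1" if "p \<in> P" "q \<in> Q" for p q
  proof -
    have "ip n (\<lambda>i. q i - p i) (\<lambda>i. q i - p i) = ip n (\<lambda>i. p i - q i) (\<lambda>i. p i - q i)"
      unfolding ip_def by (rule sum.cong) (auto simp: algebra_simps)
    then show ?thesis using sq1 that by simp
  qed
  define S where "S = (\<lambda>p. (\<lambda>i. p i - p0 i)) ` P"
  have "finite S" "S \<subseteq> Rn n" unfolding S_def using assms by (auto intro: Rn_diff)
  then obtain E where oE: "onset n E" and pE: "\<forall>s\<in>S. proj n E s = s"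
    and yE: "\<forall>y. (\<forall>s\<in>S. ip n y s = 0) \<longrightarrow> (\<forall>e\<in>E. ip n y e = 0)"
    using gs by blast
  have ER: "E \<subseteq> Rn n" using oE unfolding onset_def by auto
  have qp: "ip n (\<lambda>i. q i - q0 i) (\<lambda>i. p i - p0 i) = 0" if "p \<in> P" "q \<in> Q" for p q
    using polar[of n q q0 p p0] sq1'[OF that(1,2)] sq1'[OF assms(5) that(2)]
      sq1'[OF that(1) assms(6)] sq1'[OF assms(5,6)] by simp
  have qe: "ip n (\<lambda>i. q i - q0 i) e = 0" if "q \<in> Q" "e \<in> E" for q e
  proof -
    have "\<forall>s\<in>S. ip n (\<lambda>i. q i - q0 i) s = 0" using qp that(1) unfolding S_def by blast
    then show ?thesis using yE that(2) by blast
  qed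
  define a where "a = proj n E (\<lambda>i. q0 i - p0 i)"
  define c where "c = (\<lambda>i. p0 i + a i)"
  have aR: "a \<in> Rn n" unfolding a_def by (rule proj_Rn[OF ER])
  have cR: "c \<in> Rn n" unfolding c_def using aR assms by (auto intro: Rn_add)
  have pc: "proj n E (\<lambda>i. p i - c i) = (\<lambda>i. p i - c i)" if "p \<in> P" for p
  proof -
    have "(\<lambda>i. p i - c i) = (\<lambda>i. (\<lambda>i. p i - p0 i) i - a i)" unfolding c_def by auto
    then have "proj n E (\<lambda>i. p i - c i) = (\<lambda>i. proj n E (\<lambda>i. p i - p0 i) i - proj n E a i)"
      by (simp add: proj_diff)
    also have "\<dots> = (\<lambda>i. (\<lambda>i. p i - p0 i) i - a i)"
      using pE that unfolding S_def a_def by (simp add: proj_idem[OF oE])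
    finally show ?thesis unfolding c_def by auto
  qed
  define T where "T = (\<lambda>q. (\<lambda>i. q i - c i)) ` Q"
  have "finite T" "T \<subseteq> Rn n" unfolding T_def using assms cR by (auto intro: Rn_diff)
  then obtain F where oF: "onset n F" and pF: "\<forall>t\<in>T. proj n F t = t"
    and yF: "\<forall>y. (\<forall>t\<in>T. ip n y t = 0) \<longrightarrow> (\<forall>f\<in>F. ip n y f = 0)"
    using gs by blast
  have et: "ip n e (\<lambda>i. q i - c i) = 0" if "q \<in> Q" "e \<in> E" for q e
  proof -
    have "(\<lambda>i. q i - c i) = (\<lambda>i. (\<lambda>i. q i - q0 i) i + (\<lambda>i. (\<lambda>i. q0 i - p0 i) i - a i) i)"
      unfolding c_def by auto
    then have "ip n (\<lambda>i. q i - c i) e = ip n (\<lambda>i. q i - q0 i) e + (ip n (\<lambda>i. q0 i - p0 i) e - ip n a e)"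
      by (simp only: ip_add_left ip_diff_left)
    also have "\<dots> = 0" using qe[OF that] ip_proj_e[OF oE that(2)] unfolding a_def by simp
    finally show ?thesis by (simp add: ip_comm)
  qed
  have ef: "\<forall>e\<in>E. \<forall>f\<in>F. ip n e f = 0"
  proof (intro ballI)
    fix e f assume e: "e \<in> E" and f: "f \<in> F"
    have "\<forall>t\<in>T. ip n e t = 0" using et e unfolding T_def by blast
    then show "ip n e f = 0" using yF f by blast
  qed
  have pQ: "\<forall>q\<in>Q. proj n F (\<lambda>i. q i - c i) = (\<lambda>i. q i - c i)" using pF unfolding T_def by blast
  have pP: "\<forall>p\<in>P. proj n E (\<lambda>i. p i - c i) = (\<lambda>i. p i - c i)" using pc by blast
  show ?thesis
    using cR oE oF ef pP pQ by blast
qed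



lemma ip_comb_left: "ip n (\<lambda>i. a * x i + b * y i) z = a * ip n x z + b * ip n y z"
  unfolding ip_def by (simp add: distrib_right sum.distrib sum_distrib_left mult.assoc)

lemma proj_comb: "proj n E (\<lambda>i. a * x i + b * y i) = (\<lambda>i. a * proj n E x i + b * proj n E y i)"
  unfolding proj_def by (rule ext) (simp add: ip_comb_left distrib_right sum.distrib sum_distrib_left mult.assoc)

lemma ip_zero_left: "ip n (\<lambda>i. 0) z = 0"
  unfolding ip_def by simp

lemma proj_zero: "proj n E (\<lambda>i. 0) = (\<lambda>i. 0)"
  unfolding proj_def by (simp add: ip_zero_left)

lemma emb:
  fixes G :: "'a graph"
  assumes sg: "simple_graph G"
    and gR: "\<forall>v\<in>verts G. g v \<in> Rn n"
    and ginj: "inj_on g (verts G)"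
    and gunit: "\<forall>u v. {u,v} \<in> edges G \<longrightarrow> edist n (g u) (g v) = 1"
    and gseg: "\<forall>u v w. {u,v} \<in> edges G \<longrightarrow> w \<in> verts G \<longrightarrow> w \<noteq> u \<longrightarrow> w \<noteq> v \<longrightarrow> g w \<notin> seg (g u) (g v)"
    and cR: "c \<in> Rn n" and oE: "onset n E"
    and pE: "\<forall>v\<in>verts G. proj n E (\<lambda>i. g v i - c i) = (\<lambda>i. g v i - c i)"
    and rad: "\<forall>v\<in>verts G. edist n (g v) c = r"
  shows "spherical_embedding G (card E) r"
proof -
  define a where "a = card E"
  have finE: "finite E" using oE unfolding onset_def by auto
  obtain h where h: "bij_betw h {0..<a} E" using ex_bij_betw_nat_finite[OF finE] unfolding a_def by blast
  define \<phi> where "\<phi> = (\<lambda>x::nat\<Rightarrow>real. (\<lambda>i. if i < a then ip n (\<lambda>j. x j - c j) (h i) else 0))"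
  have \<phi>R: "\<phi> x \<in> Rn a" for x unfolding \<phi>_def Rn_def by auto
  have dist: "edist a (\<phi> x) (\<phi> y) = edist n x y"
    if x: "proj n E (\<lambda>i. x i - c i) = (\<lambda>i. x i - c i)"
    and y: "proj n E (\<lambda>i. y i - c i) = (\<lambda>i. y i - c i)" for x y
  proof -
    have d: "(\<lambda>i. (x i - c i) - (y i - c i)) = (\<lambda>i. x i - y i)" by simp
    have "proj n E (\<lambda>i. x i - y i) = (\<lambda>i. proj n E (\<lambda>j. x j - c j) i - proj n E (\<lambda>j. y j - c j) i)"
      using proj_diff[of n E "\<lambda>j. x j - c j" "\<lambda>j. y j - c j", unfolded d] .
    also have "\<dots> = (\<lambda>i. x i - y i)" using x y by simp
    finally have pxy: "proj n E (\<lambda>i. x i - y i) = (\<lambda>i. x i - y i)" .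
    have comp: "\<phi> x i - \<phi> y i = ip n (\<lambda>j. x j - y j) (h i)" if "i < a" for i
    proof -
      have "ip n (\<lambda>j. x j - y j) (h i) = ip n (\<lambda>j. x j - c j) (h i) - ip n (\<lambda>j. y j - c j) (h i)"
        using ip_diff_left[of n "\<lambda>j. x j - c j" "\<lambda>j. y j - c j" "h i", unfolded d] .
      then show ?thesis unfolding \<phi>_def using that by simp
    qed
    have "(\<Sum>i<a. (\<phi> x i - \<phi> y i)^2) = (\<Sum>i\<in>{0..<a}. (ip n (\<lambda>j. x j - y j) (h i))^2)"
      using comp by (simp add: lessThan_atLeast0)
    also have "\<dots> = (\<Sum>e\<in>E. (ip n (\<lambda>j. x j - y j) e)^2)"
      by (rule sum.reindex_bij_betw[OF h])
    also have "\<dots> = ip n (\<lambda>j. x j - y j) (\<lambda>j. x j - y j)"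
      using parseval[OF pxy] by simp
    finally show ?thesis by (simp add: edist_def[of a] edist_ip[of n x y])
  qed
  have pc: "proj n E (\<lambda>i. c i - c i) = (\<lambda>i. c i - c i)" using proj_zero by simp
  define f where "f = (\<lambda>v. \<phi> (g v))"
  have vR: "u \<in> verts G \<and> v \<in> verts G" if "{u,v} \<in> edges G" for u v
    using sg that unfolding simple_graph_def by blast
  have ue: "unit_embedding G a f"
    unfolding unit_embedding_def
  proof (intro conjI allI impI)
    show "f ` verts G \<subseteq> Rn a" unfolding f_def using \<phi>R by auto
    show "inj_on f (verts G)"
    proof (rule inj_onI)
      fix u v assume u: "u \<in> verts G" and v: "v \<in> verts G" and e: "f u = f v"
      have "edist n (g u) (g v) = edist a (f u) (f v)" unfolding f_def using dist pE u v by simp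
      also have "\<dots> = 0" using e unfolding edist_def by simp
      finally have "g u = g v" using edist_zero gR u v by blast
      then show "u = v" using ginj u v by (simp add: inj_on_def)
    qed
    fix u v
    assume e: "{u, v} \<in> edges G"
    then show "edist a (f u) (f v) = 1" unfolding f_def using dist pE vR[OF e] gunit by simp
    fix w
    assume w: "w \<in> verts G" and wu: "w \<noteq> u" and wv: "w \<noteq> v"
    show "f w \<notin> seg (f u) (f v)"
    proof
      assume "f w \<in> seg (f u) (f v)"
      then obtain t where t0: "0 \<le> t" and t1: "t \<le> 1" and ft: "\<forall>i. f w i = (1 - t) * f u i + t * f v i"
        unfolding seg_def by blast
      have uv: "u \<in> verts G" "v \<in> verts G" using vR[OF e] by auto
      define z where "z = (\<lambda>i. (1 - t) * g u i + t * g v i)"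
      have zc: "(\<lambda>i. z i - c i) = (\<lambda>i. (1 - t) * (\<lambda>j. g u j - c j) i + t * (\<lambda>j. g v j - c j) i)"
        unfolding z_def by (auto simp: algebra_simps)
      have pz: "proj n E (\<lambda>i. z i - c i) = (\<lambda>i. z i - c i)"
        unfolding zc proj_comb using pE uv by simp
      have zR: "z \<in> Rn n" using gR uv unfolding z_def Rn_def by auto
      have "\<phi> z = f w"
      proof
        fix i show "\<phi> z i = f w i"
        proof (cases "i < a")
          case True
          have "\<phi> z i = ip n (\<lambda>i. (1 - t) * (\<lambda>j. g u j - c j) i + t * (\<lambda>j. g v j - c j) i) (h i)"
            unfolding \<phi>_def zc[symmetric] using True by simp
          also have "\<dots> = (1 - t) * f u i + t * f v i" unfolding ip_comb_left f_def \<phi>_def using True by simp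
          finally show ?thesis using ft by simp
        next
          case False then show ?thesis unfolding f_def \<phi>_def by simp
        qed
      qed
      then have "edist n z (g w) = 0" using dist[OF pz, of "g w"] pE w unfolding f_def edist_def by simp
      then have "z = g w" using edist_zero zR gR w by blast
      then have "\<forall>i. g w i = (1 - t) * g u i + t * g v i" unfolding z_def by (metis)
      then have "g w \<in> seg (g u) (g v)" unfolding seg_def using t0 t1 by blast
      then show False using gseg e w wu wv by blast
    qed
  qed
  have "\<forall>v\<in>verts G. edist a (f v) (\<phi> c) = r"
    unfolding f_def using dist[OF _ pc] pE rad by simp
  then show ?thesis unfolding spherical_embedding_def a_def[symmetric] using ue \<phi>R by blast
qed



lemma verts_sum: "verts (graph_sum G H) = Inl ` verts G \<union> Inr ` verts H"
  unfolding graph_sum_def verts_def by simp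

lemma edges_sum: "edges (graph_sum G H) = ((\<lambda>e. Inl ` e) ` edges G) \<union> ((\<lambda>e. Inr ` e) ` edges H) \<union>
      {{Inl u, Inr v} | u v. u \<in> verts G \<and> v \<in> verts H}"
  unfolding graph_sum_def edges_def by simp

lemma two_elems:
  assumes "card A \<ge> 2"
  obtains a b where "a \<in> A" "b \<in> A" "a \<noteq> b"
proof -
  have fin: "finite A" using assms by (metis card.infinite not_numeral_le_zero)
  have "A \<noteq> {}" using assms by auto
  then obtain a where a: "a \<in> A" by blast
  have "\<exists>b\<in>A. b \<noteq> a"
  proof (rule ccontr)
    assume "\<not> (\<exists>b\<in>A. b \<noteq> a)"
    then have "A \<subseteq> {a}" by blast
    then have "card A \<le> 1" using card_mono[of "{a}" A] by simp
    then show False using assms by simp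
  qed
  then show ?thesis using a that by blast
qed

lemma sqrt_sq_eq: "x \<ge> 0 \<Longrightarrow> (sqrt x)^2 = x" by simp

lemma lower:
  fixes G :: "'a graph" and H :: "'b graph"
  assumes sG: "simple_graph G" and sH: "simple_graph H"
    and cG: "card (verts G) \<ge> 2" and cH: "card (verts H) \<ge> 2"
    and ue: "unit_embedding (graph_sum G H) n f"
  shows "\<exists>k1 k2 r1 r2. k1 + k2 \<le> n \<and> 0 < r1 \<and> r1 < 1 \<and> 0 < r2 \<and> r2 < 1 \<and> r1^2 + r2^2 = 1 \<and>
     spherical_embedding G k1 r1 \<and> spherical_embedding H k2 r2"
proof -
  have fR: "\<forall>x\<in>verts (graph_sum G H). f x \<in> Rn n" using ue unfolding unit_embedding_def by blast
  have finj: "inj_on f (verts (graph_sum G H))" using ue unfolding unit_embedding_def by blast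
  have funit: "\<forall>u v. {u,v} \<in> edges (graph_sum G H) \<longrightarrow> edist n (f u) (f v) = 1"
    using ue unfolding unit_embedding_def by blast
  have fseg: "\<forall>u v w. {u, v} \<in> edges (graph_sum G H) \<longrightarrow> w \<in> verts (graph_sum G H) \<longrightarrow> w \<noteq> u \<longrightarrow> w \<noteq> v \<longrightarrow>
        f w \<notin> seg (f u) (f v)" using ue unfolding unit_embedding_def by blast
  define gG where "gG = (\<lambda>v. f (Inl v :: 'a + 'b))"
  define gH where "gH = (\<lambda>v. f (Inr v :: 'a + 'b))"
  have finG: "finite (verts G)" using sG unfolding simple_graph_def by blast
  have finH: "finite (verts H)" using sH unfolding simple_graph_def by blast
  have gGR: "\<forall>v\<in>verts G. gG v \<in> Rn n" using fR unfolding gG_def verts_sum by blast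
  have gHR: "\<forall>v\<in>verts H. gH v \<in> Rn n" using fR unfolding gH_def verts_sum by blast
  have gGinj: "inj_on gG (verts G)"
  proof (rule inj_onI)
    fix u v assume "u \<in> verts G" "v \<in> verts G" "gG u = gG v"
    then have "(Inl u :: 'a + 'b) = Inl v" using finj unfolding gG_def verts_sum inj_on_def by blast
    then show "u = v" by simp
  qed
  have gHinj: "inj_on gH (verts H)"
  proof (rule inj_onI)
    fix u v assume "u \<in> verts H" "v \<in> verts H" "gH u = gH v"
    then have "(Inr u :: 'a + 'b) = Inr v" using finj unfolding gH_def verts_sum inj_on_def by blast
    then show "u = v" by simp
  qed
  have eG: "{Inl u, Inl v} \<in> edges (graph_sum G H)" if "{u,v} \<in> edges G" for u v
  proof -
    have "(Inl :: 'a \<Rightarrow> 'a + 'b) ` {u,v} \<in> (\<lambda>e. Inl ` e) ` edges G" using that by blast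
    then show ?thesis unfolding edges_sum by simp
  qed
  have eH: "{Inr u, Inr v} \<in> edges (graph_sum G H)" if "{u,v} \<in> edges H" for u v
  proof -
    have "(Inr :: 'b \<Rightarrow> 'a + 'b) ` {u,v} \<in> (\<lambda>e. Inr ` e) ` edges H" using that by blast
    then show ?thesis unfolding edges_sum by simp
  qed
  have eX: "{Inl u, Inr v} \<in> edges (graph_sum G H)" if "u \<in> verts G" "v \<in> verts H" for u v
    unfolding edges_sum using that by blast
  have gGunit: "\<forall>u v. {u,v} \<in> edges G \<longrightarrow> edist n (gG u) (gG v) = 1"
    using funit eG unfolding gG_def by blast
  have gHunit: "\<forall>u v. {u,v} \<in> edges H \<longrightarrow> edist n (gH u) (gH v) = 1"
    using funit eH unfolding gH_def by blast
  have gGseg: "\<forall>u v w. {u,v} \<in> edges G \<longrightarrow> w \<in> verts G \<longrightarrow> w \<noteq> u \<longrightarrow> w \<noteq> v \<longrightarrow> gG w \<notin> seg (gG u) (gG v)"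
  proof (intro allI impI)
    fix u v w assume "{u,v} \<in> edges G" "w \<in> verts G" "w \<noteq> u" "w \<noteq> v"
    moreover have "(Inl w :: 'a + 'b) \<in> verts (graph_sum G H)" using \<open>w \<in> verts G\<close> unfolding verts_sum by blast
    ultimately show "gG w \<notin> seg (gG u) (gG v)" using fseg eG unfolding gG_def by simp
  qed
  have gHseg: "\<forall>u v w. {u,v} \<in> edges H \<longrightarrow> w \<in> verts H \<longrightarrow> w \<noteq> u \<longrightarrow> w \<noteq> v \<longrightarrow> gH w \<notin> seg (gH u) (gH v)"
  proof (intro allI impI)
    fix u v w assume "{u,v} \<in> edges H" "w \<in> verts H" "w \<noteq> u" "w \<noteq> v"
    moreover have "(Inr w :: 'a + 'b) \<in> verts (graph_sum G H)" using \<open>w \<in> verts H\<close> unfolding verts_sum by blast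
    ultimately show "gH w \<notin> seg (gH u) (gH v)" using fseg eH unfolding gH_def by simp
  qed
  obtain u1 u2 where u1: "u1 \<in> verts G" and u2: "u2 \<in> verts G" and u12: "u1 \<noteq> u2"
    using two_elems[OF cG] by blast
  obtain v1 v2 where v1: "v1 \<in> verts H" and v2: "v2 \<in> verts H" and v12: "v1 \<noteq> v2"
    using two_elems[OF cH] by blast
  define P where "P = gG ` verts G"
  define Q where "Q = gH ` verts H"
  have cross: "\<forall>p\<in>P. \<forall>q\<in>Q. edist n p q = 1"
    using funit eX unfolding P_def Q_def gG_def gH_def by blast
  obtain c E F where cR: "c \<in> Rn n" and oE: "onset n E" and oF: "onset n F"
    and ef: "\<forall>e\<in>E. \<forall>f\<in>F. ip n e f = 0"
    and pP: "\<forall>p\<in>P. proj n E (\<lambda>i. p i - c i) = (\<lambda>i. p i - c i)"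
    and pQ: "\<forall>q\<in>Q. proj n F (\<lambda>i. q i - c i) = (\<lambda>i. q i - c i)"
    using decomp[of P Q n "gG u1" "gH v1"] finG finH gGR gHR u1 v1 cross unfolding P_def Q_def
    by blast
  have pG: "\<forall>v\<in>verts G. proj n E (\<lambda>i. gG v i - c i) = (\<lambda>i. gG v i - c i)"
    using pP unfolding P_def by blast
  have pH: "\<forall>v\<in>verts H. proj n F (\<lambda>i. gH v i - c i) = (\<lambda>i. gH v i - c i)"
    using pQ unfolding Q_def by blast
  have orth: "ip n (\<lambda>i. gH v i - c i) (\<lambda>i. gG u i - c i) = 0" if u: "u \<in> verts G" and v: "v \<in> verts H" for u v
  proof -
    let ?X = "\<lambda>i. gG u i - c i" and ?Y = "\<lambda>i. gH v i - c i"
    have eY: "ip n e ?Y = 0" if e: "e \<in> E" for e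
    proof -
      have "ip n e ?Y = ip n (proj n F ?Y) e" using pH v ip_comm[of n e ?Y] by simp
      also have "\<dots> = (\<Sum>f\<in>F. ip n ?Y f * ip n f e)" by (rule ip_proj_left)
      also have "\<dots> = 0"
      proof (rule sum.neutral, rule ballI)
        fix f assume "f \<in> F"
        then have "ip n f e = 0" using ef e ip_comm[of n f e] by simp
        then show "ip n ?Y f * ip n f e = 0" by simp
      qed
      finally show ?thesis .
    qed
    have "ip n ?Y ?X = ip n (proj n E ?X) ?Y" using pG u ip_comm[of n ?Y ?X] by simp
    also have "\<dots> = (\<Sum>e\<in>E. ip n ?X e * ip n e ?Y)" by (rule ip_proj_left)
    also have "\<dots> = 0" using eY by simp
    finally show ?thesis .
  qed
  have one: "ip n (\<lambda>i. gG u i - c i) (\<lambda>i. gG u i - c i) + ip n (\<lambda>i. gH v i - c i) (\<lambda>i. gH v i - c i) = 1"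
    if u: "u \<in> verts G" and v: "v \<in> verts H" for u v
  proof -
    let ?X = "\<lambda>i. gG u i - c i" and ?Y = "\<lambda>i. gH v i - c i"
    have d: "(\<lambda>i. (gH v i - c i) - (gG u i - c i)) = (\<lambda>i. gH v i - gG u i)" by simp
    have "1 = (edist n (gH v) (gG u))^2"
      using funit eX[OF u v] unfolding gG_def gH_def by (simp add: insert_commute)
    also have "\<dots> = ip n (\<lambda>i. gH v i - gG u i) (\<lambda>i. gH v i - gG u i)" by (rule edist_sq)
    also have "\<dots> = ip n (\<lambda>i. ?Y i - ?X i) (\<lambda>i. ?Y i - ?X i)" using d by simp
    also have "\<dots> = ip n ?Y ?Y - ip n ?X ?Y - (ip n ?Y ?X - ip n ?X ?X)"
      by (simp only: ip_diff_left ip_diff_right)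
    also have "\<dots> = ip n ?Y ?Y + ip n ?X ?X"
      using orth[OF u v] ip_comm[of n ?X ?Y] by simp
    finally show ?thesis by simp
  qed
  define r1 where "r1 = edist n (gG u1) c"
  define r2 where "r2 = edist n (gH v1) c"
  have r1sq: "r1^2 = ip n (\<lambda>i. gG u1 i - c i) (\<lambda>i. gG u1 i - c i)" unfolding r1_def by (rule edist_sq)
  have r2sq: "r2^2 = ip n (\<lambda>i. gH v1 i - c i) (\<lambda>i. gH v1 i - c i)" unfolding r2_def by (rule edist_sq)
  have radG: "\<forall>v\<in>verts G. edist n (gG v) c = r1"
  proof
    fix v assume v: "v \<in> verts G"
    have "ip n (\<lambda>i. gG v i - c i) (\<lambda>i. gG v i - c i) = ip n (\<lambda>i. gG u1 i - c i) (\<lambda>i. gG u1 i - c i)"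
      using one[OF v v1] one[OF u1 v1] by simp
    then show "edist n (gG v) c = r1" unfolding r1_def by (simp add: edist_ip)
  qed
  have radH: "\<forall>v\<in>verts H. edist n (gH v) c = r2"
  proof
    fix v assume v: "v \<in> verts H"
    have "ip n (\<lambda>i. gH v i - c i) (\<lambda>i. gH v i - c i) = ip n (\<lambda>i. gH v1 i - c i) (\<lambda>i. gH v1 i - c i)"
      using one[OF u1 v] one[OF u1 v1] by simp
    then show "edist n (gH v) c = r2" unfolding r2_def by (simp add: edist_ip)
  qed
  have rsum: "r1^2 + r2^2 = 1" using one[OF u1 v1] r1sq r2sq by simp
  have r1nn: "r1 \<ge> 0" unfolding r1_def edist_def by (simp add: sum_nonneg)
  have r2nn: "r2 \<ge> 0" unfolding r2_def edist_def by (simp add: sum_nonneg)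
  have r1pos: "r1 > 0"
  proof (rule ccontr)
    assume "\<not> r1 > 0"
    then have "r1 = 0" using r1nn by simp
    then have "gG u1 = c" "gG u2 = c" using radG u1 u2 edist_zero gGR cR by metis+
    then show False using gGinj u1 u2 u12 unfolding inj_on_def by metis
  qed
  have r2pos: "r2 > 0"
  proof (rule ccontr)
    assume "\<not> r2 > 0"
    then have "r2 = 0" using r2nn by simp
    then have "gH v1 = c" "gH v2 = c" using radH v1 v2 edist_zero gHR cR by metis+
    then show False using gHinj v1 v2 v12 unfolding inj_on_def by metis
  qed
  have r1lt: "r1 < 1"
  proof -
    have "r2^2 > 0" using r2pos by simp
    then have "r1^2 < 1" using rsum by linarith
    then show ?thesis using power2_less_imp_less[of r1 1] by simp
  qed
  have r2lt: "r2 < 1"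
  proof -
    have "r1^2 > 0" using r1pos by simp
    then have "r2^2 < 1" using rsum by linarith
    then show ?thesis using power2_less_imp_less[of r2 1] by simp
  qed
  have spG: "spherical_embedding G (card E) r1"
    by (rule emb[OF sG _ gGinj gGunit gGseg cR oE pG radG]) (use gGR in blast)
  have spH: "spherical_embedding H (card F) r2"
    by (rule emb[OF sH _ gHinj gHunit gHseg cR oF pH radH]) (use gHR in blast)
  have "card E + card F \<le> n" by (rule onset_union[OF oE oF ef])
  then show ?thesis using spG spH r1pos r2pos r1lt r2lt rsum by blast
qed



lemma sum_split_add: "(\<Sum>i<k1+k2. (x i :: real)) = (\<Sum>i<k1. x i) + (\<Sum>j<k2. x (k1 + j))"
  for k1 k2 :: nat
  by (induct k2) (simp_all add: add.assoc)

lemma seg_sym1: "z \<in> seg x y \<Longrightarrow> z \<in> seg y x"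
  unfolding seg_def
proof (elim CollectE exE conjE, intro CollectI)
  fix t assume t0: "0 \<le> t" and t1: "t \<le> 1" and t: "\<forall>i. z i = (1 - t) * x i + t * y i"
  have "\<forall>i. z i = (1 - (1 - t)) * y i + (1 - t) * x i"
    using t by (simp add: algebra_simps)
  moreover have "0 \<le> 1 - t" "1 - t \<le> 1" using t0 t1 by auto
  ultimately show "\<exists>t\<ge>0. t \<le> 1 \<and> (\<forall>i. z i = (1 - t) * y i + t * x i)" by blast
qed
lemma seg_sym: "seg x y = seg y x"
  using seg_sym1 by blast

lemma edge_cases:
  fixes G :: "'a graph" and H :: "'b graph"
  assumes sG: "simple_graph G" and sH: "simple_graph H"
    and e: "{u, v} \<in> edges (graph_sum G H)"
  shows "(\<exists>a b. u = Inl a \<and> v = Inl b \<and> {a,b} \<in> edges G) \<or>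
         (\<exists>a b. u = Inr a \<and> v = Inr b \<and> {a,b} \<in> edges H) \<or>
         (\<exists>a b. a \<in> verts G \<and> b \<in> verts H \<and> ((u = Inl a \<and> v = Inr b) \<or> (u = Inr b \<and> v = Inl a)))"
proof -
  consider (g) e' where "e' \<in> edges G" "{u,v} = Inl ` e'"
    | (h) e' where "e' \<in> edges H" "{u,v} = Inr ` e'"
    | (x) a b where "a \<in> verts G" "b \<in> verts H" "{u,v} = {Inl a, Inr b}"
    using e unfolding edges_sum by blast
  then show ?thesis
  proof cases
    case g
    then obtain x y where xy: "e' = {x,y}" using sG unfolding simple_graph_def card_2_iff by metis
    then have "{u,v} = {Inl x, Inl y}" using g by simp
    then have "(u = Inl x \<and> v = Inl y) \<or> (u = Inl y \<and> v = Inl x)" by (simp add: doubleton_eq_iff)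
    moreover have "{x,y} \<in> edges G" "{y,x} \<in> edges G" using g xy by (auto simp: insert_commute)
    ultimately show ?thesis by blast
  next
    case h
    then obtain x y where xy: "e' = {x,y}" using sH unfolding simple_graph_def card_2_iff by metis
    then have "{u,v} = {Inr x, Inr y}" using h by simp
    then have "(u = Inr x \<and> v = Inr y) \<or> (u = Inr y \<and> v = Inr x)" by (simp add: doubleton_eq_iff)
    moreover have "{x,y} \<in> edges H" "{y,x} \<in> edges H" using h xy by (auto simp: insert_commute)
    ultimately show ?thesis by blast
  next
    case x
    then have "(u = Inl a \<and> v = Inr b) \<or> (u = Inr b \<and> v = Inl a)" by (simp add: doubleton_eq_iff)
    then show ?thesis using x by blast
  qed
qed

lemma edge_verts: "simple_graph G \<Longrightarrow> {a,b} \<in> edges G \<Longrightarrow> a \<in> verts G \<and> b \<in> verts G"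
  unfolding simple_graph_def by blast

lemma edist_sq_sum: "(edist n x y)^2 = (\<Sum>i<n. (x i - y i)^2)"
  unfolding edist_def by (simp add: sum_nonneg)

lemma construct:
  fixes G :: "'a graph" and H :: "'b graph"
  assumes sG: "simple_graph G" and sH: "simple_graph H"
    and spG: "spherical_embedding G k1 r1" and spH: "spherical_embedding H k2 r2"
    and r1: "r1 > 0" and r2: "r2 > 0" and rs: "r1^2 + r2^2 = 1"
  shows "\<exists>f. unit_embedding (graph_sum G H) (k1 + k2) f"
proof -
  obtain f1 c1 where ue1: "unit_embedding G k1 f1" and c1R: "c1 \<in> Rn k1"
    and rad1: "\<forall>v\<in>verts G. edist k1 (f1 v) c1 = r1"
    using spG unfolding spherical_embedding_def by blast
  obtain f2 c2 where ue2: "unit_embedding H k2 f2" and c2R: "c2 \<in> Rn k2"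
    and rad2: "\<forall>v\<in>verts H. edist k2 (f2 v) c2 = r2"
    using spH unfolding spherical_embedding_def by blast
  have f1R: "\<And>v i. v \<in> verts G \<Longrightarrow> i \<ge> k1 \<Longrightarrow> f1 v i = 0"
    using ue1 unfolding unit_embedding_def Rn_def by blast
  have f2R: "\<And>v i. v \<in> verts H \<Longrightarrow> i \<ge> k2 \<Longrightarrow> f2 v i = 0"
    using ue2 unfolding unit_embedding_def Rn_def by blast
  have c1z: "\<And>i. i \<ge> k1 \<Longrightarrow> c1 i = 0" using c1R unfolding Rn_def by blast
  have c2z: "\<And>i. i \<ge> k2 \<Longrightarrow> c2 i = 0" using c2R unfolding Rn_def by blast
  have inj1: "inj_on f1 (verts G)" using ue1 unfolding unit_embedding_def by blast
  have inj2: "inj_on f2 (verts H)" using ue2 unfolding unit_embedding_def by blast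
  have unit1: "\<And>a b. {a,b} \<in> edges G \<Longrightarrow> edist k1 (f1 a) (f1 b) = 1"
    using ue1 unfolding unit_embedding_def by blast
  have unit2: "\<And>a b. {a,b} \<in> edges H \<Longrightarrow> edist k2 (f2 a) (f2 b) = 1"
    using ue2 unfolding unit_embedding_def by blast
  have seg1: "\<And>a b d. {a,b} \<in> edges G \<Longrightarrow> d \<in> verts G \<Longrightarrow> d \<noteq> a \<Longrightarrow> d \<noteq> b \<Longrightarrow> f1 d \<notin> seg (f1 a) (f1 b)"
    using ue1 unfolding unit_embedding_def by blast
  have seg2: "\<And>a b d. {a,b} \<in> edges H \<Longrightarrow> d \<in> verts H \<Longrightarrow> d \<noteq> a \<Longrightarrow> d \<noteq> b \<Longrightarrow> f2 d \<notin> seg (f2 a) (f2 b)"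
    using ue2 unfolding unit_embedding_def by blast
  define A where "A = (\<lambda>v. (\<lambda>i. if i < k1 then f1 v i - c1 i else (0::real)))"
  define B where "B = (\<lambda>v. (\<lambda>i. if k1 \<le> i \<and> i < k1 + k2 then f2 v (i - k1) - c2 (i - k1) else (0::real)))"
  define F where "F = case_sum A B"
  have Alo: "\<And>v i. i < k1 \<Longrightarrow> A v i = f1 v i - c1 i" unfolding A_def by simp
  have Ahi: "\<And>v j. A v (k1 + j) = 0" unfolding A_def by simp
  have Blo: "\<And>v i. i < k1 \<Longrightarrow> B v i = 0" unfolding B_def by simp
  have Bhi: "\<And>v j. j < k2 \<Longrightarrow> B v (k1 + j) = f2 v j - c2 j" unfolding B_def by simp
  have sq1: "(\<Sum>i<k1. (f1 v i - c1 i)^2) = r1^2" if "v \<in> verts G" for v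
    using rad1 that edist_sq_sum[of k1 "f1 v" c1] by simp
  have sq2: "(\<Sum>i<k2. (f2 v i - c2 i)^2) = r2^2" if "v \<in> verts H" for v
    using rad2 that edist_sq_sum[of k2 "f2 v" c2] by simp
  have nz1: "\<exists>i<k1. A v i \<noteq> 0" if "v \<in> verts G" for v
  proof (rule ccontr)
    assume "\<not> (\<exists>i<k1. A v i \<noteq> 0)"
    then have "\<forall>i<k1. f1 v i - c1 i = 0" using Alo by simp
    then have "(\<Sum>i<k1. (f1 v i - c1 i)^2) = 0" by simp
    then show False using sq1[OF that] r1 by simp
  qed
  have nz2: "\<exists>j<k2. B v (k1 + j) \<noteq> 0" if "v \<in> verts H" for v
  proof (rule ccontr)
    assume "\<not> (\<exists>j<k2. B v (k1 + j) \<noteq> 0)"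
    then have "\<forall>j<k2. f2 v j - c2 j = 0" using Bhi by simp
    then have "(\<Sum>j<k2. (f2 v j - c2 j)^2) = 0" by simp
    then show False using sq2[OF that] r2 by simp
  qed
  have dist: "edist (k1 + k2) x y = sqrt ((\<Sum>i<k1. (x i - y i)^2) + (\<Sum>j<k2. (x (k1 + j) - y (k1 + j))^2))" for x y
    unfolding edist_def by (simp add: sum_split_add)
  have dAA: "edist (k1 + k2) (A a) (A b) = edist k1 (f1 a) (f1 b)" for a b
    unfolding dist by (simp add: edist_def[of k1] Alo Ahi)
  have dBB: "edist (k1 + k2) (B a) (B b) = edist k2 (f2 a) (f2 b)" for a b
    unfolding dist by (simp add: edist_def[of k2] Blo Bhi)
  have dAB: "edist (k1 + k2) (A a) (B b) = 1" if "a \<in> verts G" "b \<in> verts H" for a b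
  proof -
    have "(\<Sum>i<k1. (A a i - B b i)^2) = r1^2" using sq1[OF that(1)] by (simp add: Alo Blo)
    moreover have "(\<Sum>j<k2. (A a (k1 + j) - B b (k1 + j))^2) = r2^2" using sq2[OF that(2)]
      by (simp add: Ahi Bhi power2_commute)
    ultimately show ?thesis unfolding dist using rs by simp
  qed
  have AR: "A v \<in> Rn (k1 + k2)" for v unfolding A_def Rn_def by simp
  have BR: "B v \<in> Rn (k1 + k2)" for v unfolding B_def Rn_def by simp
  have injA: "a = a'" if "a \<in> verts G" "a' \<in> verts G" "A a = A a'" for a a'
  proof -
    have "f1 a = f1 a'"
    proof
      fix i show "f1 a i = f1 a' i"
      proof (cases "i < k1")
        case True then show ?thesis using fun_cong[OF that(3), of i] Alo by simp
      next
        case False then show ?thesis using f1R that by simp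
      qed
    qed
    then show ?thesis using inj1 that unfolding inj_on_def by blast
  qed
  have injB: "b = b'" if "b \<in> verts H" "b' \<in> verts H" "B b = B b'" for b b'
  proof -
    have "f2 b = f2 b'"
    proof
      fix j show "f2 b j = f2 b' j"
      proof (cases "j < k2")
        case True then show ?thesis using fun_cong[OF that(3), of "k1 + j"] Bhi by simp
      next
        case False then show ?thesis using f2R that by simp
      qed
    qed
    then show ?thesis using inj2 that unfolding inj_on_def by blast
  qed
  have AneB: "A a \<noteq> B b" if aG: "a \<in> verts G" for a b
  proof
    assume eq: "A a = B b"
    obtain i where "i < k1" "A a i \<noteq> 0" using nz1[OF aG] by blast
    then show False using fun_cong[OF eq, of i] Blo by simp
  qed
  have Vcases: "(\<exists>d. w = Inl d \<and> d \<in> verts G) \<or> (\<exists>d. w = Inr d \<and> d \<in> verts H)"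
    if "w \<in> verts (graph_sum G H)" for w
    using that unfolding verts_sum by blast
  have injF: "inj_on F (verts (graph_sum G H))"
  proof (rule inj_onI)
    fix x y assume x: "x \<in> verts (graph_sum G H)" and y: "y \<in> verts (graph_sum G H)" and eq: "F x = F y"
    show "x = y"
      using Vcases[OF x] Vcases[OF y]
    proof (elim disjE exE conjE)
      fix a b assume "x = Inl a" "a \<in> verts G" "y = Inl b" "b \<in> verts G"
      then show "x = y" using eq injA unfolding F_def by simp
    next
      fix a b assume "x = Inl a" "a \<in> verts G" "y = Inr b" "b \<in> verts H"
      then show "x = y" using eq AneB unfolding F_def by simp
    next
      fix a b assume "x = Inr a" "a \<in> verts H" "y = Inl b" "b \<in> verts G"
      then show "x = y" using eq AneB[of b a] unfolding F_def by (simp add: eq_commute)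
    next
      fix a b assume "x = Inr a" "a \<in> verts H" "y = Inr b" "b \<in> verts H"
      then show "x = y" using eq injB unfolding F_def by simp
    qed
  qed
  have crossseg: "F w \<notin> seg (F (Inl a)) (F (Inr b))"
    if a: "a \<in> verts G" and b: "b \<in> verts H" and w: "w \<in> verts (graph_sum G H)"
      and wa: "w \<noteq> Inl a" and wb: "w \<noteq> Inr b" for a b w
  proof
    assume "F w \<in> seg (F (Inl a)) (F (Inr b))"
    then obtain t where t: "\<forall>i. F w i = (1 - t) * F (Inl a) i + t * F (Inr b) i"
      unfolding seg_def by blast
    have aV: "Inl a \<in> verts (graph_sum G H)" and bV: "Inr b \<in> verts (graph_sum G H)"
      using a b unfolding verts_sum by auto
    show False using Vcases[OF w]
    proof (elim disjE exE conjE)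
      fix d assume wd: "w = Inl d" "d \<in> verts G"
      obtain j where j: "j < k2" "B b (k1 + j) \<noteq> 0" using nz2[OF b] by blast
      have "0 = t * B b (k1 + j)" using t[rule_format, of "k1 + j"] wd Ahi unfolding F_def by simp
      then have "t = 0" using j by simp
      then have "F w = F (Inl a)" using t by (intro ext) simp
      then show False using injF w aV wa unfolding inj_on_def by blast
    next
      fix d assume wd: "w = Inr d" "d \<in> verts H"
      obtain i where i: "i < k1" "A a i \<noteq> 0" using nz1[OF a] by blast
      have "0 = (1 - t) * A a i" using t[rule_format, of i] wd Blo i unfolding F_def by simp
      then have "t = 1" using i by simp
      then have "F w = F (Inr b)" using t by (intro ext) simp
      then show False using injF w bV wb unfolding inj_on_def by blast
    qed
  qed
  have ue: "unit_embedding (graph_sum G H) (k1 + k2) F"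
    unfolding unit_embedding_def
  proof (intro conjI allI impI)
    show "F ` verts (graph_sum G H) \<subseteq> Rn (k1 + k2)"
    proof
      fix x assume "x \<in> F ` verts (graph_sum G H)"
      then obtain w where "w \<in> verts (graph_sum G H)" "x = F w" by blast
      then show "x \<in> Rn (k1 + k2)" using Vcases AR BR unfolding F_def by (cases w) auto
    qed
    show "inj_on F (verts (graph_sum G H))" by (rule injF)
    fix u v
    assume e: "{u, v} \<in> edges (graph_sum G H)"
    show "edist (k1 + k2) (F u) (F v) = 1"
      using edge_cases[OF sG sH e]
    proof (elim disjE exE conjE)
      fix a b assume "u = Inl a" "v = Inl b" "{a,b} \<in> edges G"
      then show ?thesis using dAA unit1 unfolding F_def by simp
    next
      fix a b assume "u = Inr a" "v = Inr b" "{a,b} \<in> edges H"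
      then show ?thesis using dBB unit2 unfolding F_def by simp
    next
      fix a b assume "a \<in> verts G" "b \<in> verts H" "u = Inl a" "v = Inr b"
      then show ?thesis using dAB unfolding F_def by simp
    next
      fix a b assume ab: "a \<in> verts G" "b \<in> verts H" "u = Inr b" "v = Inl a"
      have "edist (k1 + k2) (B b) (A a) = edist (k1 + k2) (A a) (B b)"
        unfolding edist_def by (simp add: power2_commute)
      then show ?thesis using dAB[OF ab(1,2)] ab unfolding F_def by simp
    qed
    fix w
    assume w: "w \<in> verts (graph_sum G H)" and wu: "w \<noteq> u" and wv: "w \<noteq> v"
    show "F w \<notin> seg (F u) (F v)"
      using edge_cases[OF sG sH e]
    proof (elim disjE exE conjE)
      fix a b assume u: "u = Inl a" and v: "v = Inl b" and ab: "{a,b} \<in> edges G"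
      have aG: "a \<in> verts G" and bG: "b \<in> verts G" using edge_verts[OF sG ab] by auto
      show ?thesis
      proof
        assume "F w \<in> seg (F u) (F v)"
        then obtain t where t0: "0 \<le> t" and t1: "t \<le> 1" and t: "\<forall>i. F w i = (1 - t) * A a i + t * A b i"
          unfolding seg_def u v F_def by auto
        show False using Vcases[OF w]
        proof (elim disjE exE conjE)
          fix d assume wd: "w = Inl d" "d \<in> verts G"
          have "\<forall>i. f1 d i = (1 - t) * f1 a i + t * f1 b i"
          proof
            fix i show "f1 d i = (1 - t) * f1 a i + t * f1 b i"
            proof (cases "i < k1")
              case True
              have "f1 d i - c1 i = (1 - t) * (f1 a i - c1 i) + t * (f1 b i - c1 i)"
                using t[rule_format, of i] wd True Alo unfolding F_def by simp
              then show ?thesis by (simp add: algebra_simps)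
            next
              case False then show ?thesis using f1R aG bG wd by simp
            qed
          qed
          then have "f1 d \<in> seg (f1 a) (f1 b)" unfolding seg_def using t0 t1 by blast
          moreover have "d \<noteq> a" "d \<noteq> b" using wd wu wv u v by auto
          ultimately show False using seg1[OF ab wd(2)] by blast
        next
          fix d assume wd: "w = Inr d" "d \<in> verts H"
          obtain j where j: "j < k2" "B d (k1 + j) \<noteq> 0" using nz2[OF wd(2)] by blast
          show False using t[rule_format, of "k1 + j"] wd j Ahi unfolding F_def by simp
        qed
      qed
    next
      fix a b assume u: "u = Inr a" and v: "v = Inr b" and ab: "{a,b} \<in> edges H"
      have aH: "a \<in> verts H" and bH: "b \<in> verts H" using edge_verts[OF sH ab] by auto
      show ?thesis
      proof
        assume "F w \<in> seg (F u) (F v)"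
        then obtain t where t0: "0 \<le> t" and t1: "t \<le> 1" and t: "\<forall>i. F w i = (1 - t) * B a i + t * B b i"
          unfolding seg_def u v F_def by auto
        show False using Vcases[OF w]
        proof (elim disjE exE conjE)
          fix d assume wd: "w = Inr d" "d \<in> verts H"
          have "\<forall>j. f2 d j = (1 - t) * f2 a j + t * f2 b j"
          proof
            fix j show "f2 d j = (1 - t) * f2 a j + t * f2 b j"
            proof (cases "j < k2")
              case True
              have "f2 d j - c2 j = (1 - t) * (f2 a j - c2 j) + t * (f2 b j - c2 j)"
                using t[rule_format, of "k1 + j"] wd True Bhi unfolding F_def by simp
              then show ?thesis by (simp add: algebra_simps)
            next
              case False then show ?thesis using f2R aH bH wd by simp
            qed
          qed
          then have "f2 d \<in> seg (f2 a) (f2 b)" unfolding seg_def using t0 t1 by blast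
          moreover have "d \<noteq> a" "d \<noteq> b" using wd wu wv u v by auto
          ultimately show False using seg2[OF ab wd(2)] by blast
        next
          fix d assume wd: "w = Inl d" "d \<in> verts G"
          obtain i where i: "i < k1" "A d i \<noteq> 0" using nz1[OF wd(2)] by blast
          show False using t[rule_format, of i] wd i Blo unfolding F_def by simp
        qed
      qed
    next
      fix a b assume "a \<in> verts G" "b \<in> verts H" "u = Inl a" "v = Inr b"
      then show ?thesis using crossseg w wu wv by blast
    next
      fix a b assume "a \<in> verts G" "b \<in> verts H" "u = Inr b" "v = Inl a"
      then show ?thesis using crossseg[of a b w] w wu wv seg_sym by metis
    qed
  qed
  then show ?thesis by blast
qed



lemma simple_sum:
  fixes G :: "'a graph" and H :: "'b graph"
  assumes sG: "simple_graph G" and sH: "simple_graph H"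
  shows "simple_graph (graph_sum G H)"
  unfolding simple_graph_def
proof (rule conjI)
  show "finite (verts (graph_sum G H))"
    using sG sH unfolding simple_graph_def verts_sum by blast
  show "\<forall>e\<in>edges (graph_sum G H). e \<subseteq> verts (graph_sum G H) \<and> card e = 2"
  proof
  fix e assume e: "e \<in> edges (graph_sum G H)"
  consider (g) e' where "e' \<in> edges G" "e = Inl ` e'"
    | (h) e' where "e' \<in> edges H" "e = Inr ` e'"
    | (x) a b where "a \<in> verts G" "b \<in> verts H" "e = {Inl a, Inr b}"
    using e unfolding edges_sum by blast
  then show "e \<subseteq> verts (graph_sum G H) \<and> card e = 2"
  proof cases
    case g
    then have "e' \<subseteq> verts G" "card e' = 2" using sG unfolding simple_graph_def by blast+
    moreover have "card (Inl ` e' :: ('a + 'b) set) = card e'" by (rule card_image) simp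
    ultimately show ?thesis using g unfolding verts_sum by auto
  next
    case h
    then have "e' \<subseteq> verts H" "card e' = 2" using sH unfolding simple_graph_def by blast+
    moreover have "card (Inr ` e' :: ('a + 'b) set) = card e'" by (rule card_image) simp
    ultimately show ?thesis using h unfolding verts_sum by auto
  next
    case x
    then show ?thesis unfolding verts_sum by auto
  qed
  qed
qed

lemma simplex:
  assumes sG: "simple_graph G"
  shows "\<exists>n f. unit_embedding G n f"
proof -
  have fin: "finite (verts G)" using sG unfolding simple_graph_def by blast
  define N where "N = card (verts G)"
  obtain h where h: "bij_betw h (verts G) {0..<N}" using ex_bij_betw_finite_nat[OF fin] unfolding N_def by blast
  have hN: "h v < N" if "v \<in> verts G" for v using h that unfolding bij_betw_def by auto
  have hinj: "inj_on h (verts G)" using h unfolding bij_betw_def by blast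
  define s where "s = sqrt (1/2 :: real)"
  have s2: "s * s = 1/2" unfolding s_def by (simp add: real_sqrt_mult[symmetric])
  have spos: "s \<noteq> 0" unfolding s_def by simp
  define f where "f = (\<lambda>v. (\<lambda>i. if i = h v then s else 0))"
  have uvne: "u \<in> verts G \<and> v \<in> verts G \<and> u \<noteq> v" if "{u,v} \<in> edges G" for u v
  proof -
    have "{u,v} \<subseteq> verts G" "card {u,v} = 2" using sG that unfolding simple_graph_def by blast+
    then show ?thesis by (cases "u = v") auto
  qed
  have "unit_embedding G N f"
    unfolding unit_embedding_def
  proof (intro conjI allI impI)
    show "f ` verts G \<subseteq> Rn N" unfolding f_def Rn_def using hN by (force simp: not_less[symmetric])
    show "inj_on f (verts G)"
    proof (rule inj_onI)
      fix u v assume u: "u \<in> verts G" and v: "v \<in> verts G" and e: "f u = f v"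
      have "f v (h u) = s" using fun_cong[OF e, of "h u"] unfolding f_def by simp
      then have "h v = h u" using spos unfolding f_def by (auto split: if_splits)
      then show "u = v" using hinj u v unfolding inj_on_def by metis
    qed
    fix u v assume e: "{u,v} \<in> edges G"
    have u: "u \<in> verts G" and v: "v \<in> verts G" and uv: "u \<noteq> v" using uvne[OF e] by auto
    have huv: "h u \<noteq> h v" using hinj u v uv unfolding inj_on_def by metis
    have pt: "(f u i - f v i)^2 = (if i = h u then 1/2 else 0) + (if i = h v then 1/2 else 0)" for i
      unfolding f_def using huv s2 by (auto simp: power2_eq_square)
    have "(\<Sum>i<N. (f u i - f v i)^2) = 1"
      unfolding pt sum.distrib using hN[OF u] hN[OF v] by simp
    then show "edist N (f u) (f v) = 1" unfolding edist_def by simp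
    fix w assume w: "w \<in> verts G" and wu: "w \<noteq> u" and wv: "w \<noteq> v"
    have hwu: "h w \<noteq> h u" using hinj u w wu unfolding inj_on_def by metis
    have hwv: "h w \<noteq> h v" using hinj v w wv unfolding inj_on_def by metis
    show "f w \<notin> seg (f u) (f v)"
    proof
      assume "f w \<in> seg (f u) (f v)"
      then obtain t where t: "\<forall>i. f w i = (1 - t) * f u i + t * f v i" unfolding seg_def by blast
      have "f w (h w) = 0" using t[rule_format, of "h w"] hwu hwv unfolding f_def by simp
      then show False using spos unfolding f_def by simp
    qed
  qed
  then show ?thesis by blast
qed

theorem mainTheorem5:
  fixes G :: "'a graph" and H :: "'b graph"
  assumes "simple_graph G" and "simple_graph H"
    and "card (verts G) \<ge> 2" and "card (verts H) \<ge> 2"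
  shows "((\<exists>r1 r2. 0 < r1 \<and> r1 < 1 \<and> 0 < r2 \<and> r2 < 1 \<and> r1^2 + r2^2 = 1 \<and>
              spherical_embedding G (sdim G) r1 \<and> spherical_embedding H (sdim H) r2)
           \<longrightarrow> graph_dim (graph_sum G H) = sdim G + sdim H)
       \<and> ((\<not> (\<exists>r1 r2. 0 < r1 \<and> r1 < 1 \<and> 0 < r2 \<and> r2 < 1 \<and> r1^2 + r2^2 = 1 \<and>
              spherical_embedding G (sdim G) r1 \<and> spherical_embedding H (sdim H) r2))
           \<longrightarrow> graph_dim (graph_sum G H) > sdim G + sdim H)"
proof -
  note sG = assms(1) and sH = assms(2) and cG = assms(3) and cH = assms(4)
  let ?S = "graph_sum G H"
  let ?C = "\<exists>r1 r2. 0 < r1 \<and> r1 < 1 \<and> 0 < r2 \<and> r2 < 1 \<and> r1^2 + r2^2 = 1 \<and>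
              spherical_embedding G (sdim G) r1 \<and> spherical_embedding H (sdim H) r2"
  have "\<exists>n f. unit_embedding ?S n f" by (rule simplex[OF simple_sum[OF sG sH]])
  then have "\<exists>f. unit_embedding ?S (graph_dim ?S) f"
    unfolding graph_dim_def by (rule LeastI_ex[where P = "\<lambda>n. \<exists>f. unit_embedding ?S n f"]) 
  then obtain f where "unit_embedding ?S (graph_dim ?S) f" by blast
  then obtain k1 k2 r1 r2 where k: "k1 + k2 \<le> graph_dim ?S" and r1: "0 < r1" "r1 < 1"
    and r2: "0 < r2" "r2 < 1" and rs: "r1^2 + r2^2 = 1"
    and spG: "spherical_embedding G k1 r1" and spH: "spherical_embedding H k2 r2"
    using lower[OF sG sH cG cH] by blast
  have sdG: "sdim G \<le> k1" unfolding sdim_def by (rule Least_le) (use r1 spG in blast)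
  have sdH: "sdim H \<le> k2" unfolding sdim_def by (rule Least_le) (use r2 spH in blast)
  have ge: "sdim G + sdim H \<le> graph_dim ?S" using sdG sdH k by simp
  show ?thesis
  proof (intro conjI impI)
    assume ?C
    then obtain s1 s2 where s: "0 < s1" "0 < s2" "s1^2 + s2^2 = 1"
      and sp1: "spherical_embedding G (sdim G) s1" and sp2: "spherical_embedding H (sdim H) s2" by blast
    obtain g where "unit_embedding ?S (sdim G + sdim H) g"
      using construct[OF sG sH sp1 sp2 s] by blast
    then have "graph_dim ?S \<le> sdim G + sdim H" unfolding graph_dim_def by (rule Least_le[where P = "\<lambda>n. \<exists>f. unit_embedding ?S n f", OF exI])
    then show "graph_dim ?S = sdim G + sdim H" using ge by simp
  next
    assume nC: "\<not> ?C"
    show "graph_dim ?S > sdim G + sdim H"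
    proof (rule ccontr)
      assume "\<not> graph_dim ?S > sdim G + sdim H"
      then have "k1 = sdim G" "k2 = sdim H" using ge k sdG sdH by simp_all
      then have ?C using r1 r2 rs spG spH by blast
      then show False using nC by blast
    qed
  qed
qed

end
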